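(* Let $R$ be a commutative ring and $\mathbf n=(n_1,\dots,n_s)$ positive integers with $\sum n_i=n$. Then $H^i(\mathcal{P}_{\mathbf n}(R),\mathrm{M}_n(R)/\mathcal{P}_{\mathbf n}(R))=0$ for all $i\ge0$.
   Context: $\mathcal{P}_{\mathbf n}(R)=\{(a_{ij})\in\mathrm{M}_n(R)\mid a_{ij}=0 \text{ if } \sum_{k\le t}n_k<i\le\sum_{k\le t+1}n_k \text{ and } j\le\sum_{k\le t}n_k\}$, the block upper triangular matrices with diagonal blocks of sizes $n_1,\dots,n_s$. $H^i$ is Hochschild cohomology; $\mathrm{M}_n(R)/\mathcal{P}_{\mathbf n}(R)$ is a bimodule via matrix multiplication. *)

theory Defs
  imports Main
begin

text \<open>Matrices over a commutative ring 'r: functions nat => nat => 'r,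
  an n x n matrix being one whose entries outside [0,n) x [0,n) vanish.
  Indices are 0-based.\<close>

type_synonym 'r mat = "nat \<Rightarrow> nat \<Rightarrow> 'r"

definition mzero :: "'r::comm_ring_1 mat" where
  "mzero = (\<lambda>i j. 0)"

definition madd :: "'r::comm_ring_1 mat \<Rightarrow> 'r mat \<Rightarrow> 'r mat" where
  "madd A B = (\<lambda>i j. A i j + B i j)"

definition msmult :: "'r::comm_ring_1 \<Rightarrow> 'r mat \<Rightarrow> 'r mat" where
  "msmult c A = (\<lambda>i j. c * A i j)"

definition mat_mult :: "nat \<Rightarrow> 'r::comm_ring_1 mat \<Rightarrow> 'r mat \<Rightarrow> 'r mat" where
  "mat_mult n A B = (\<lambda>i j. \<Sum>k<n. A i k * B k j)"

definition mats :: "nat \<Rightarrow> 'r::comm_ring_1 mat set" where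
  "mats n = {A. \<forall>i j. (n \<le> i \<or> n \<le> j) \<longrightarrow> A i j = 0}"

definition psum :: "nat list \<Rightarrow> nat \<Rightarrow> nat" where
  "psum ns t = sum_list (take t ns)"

text \<open>Position (i,j) (0-based) is forced to be zero in P_n(R): the 1-based row
  index i+1 satisfies psum t < i+1 <= psum (t+1) and the 1-based column j+1 <= psum t.\<close>
definition forced_zero :: "nat list \<Rightarrow> nat \<Rightarrow> nat \<Rightarrow> bool" where
  "forced_zero ns i j =
     (\<exists>t<length ns. psum ns t < Suc i \<and> Suc i \<le> psum ns (Suc t) \<and> Suc j \<le> psum ns t)"

definition Pn :: "'r itself \<Rightarrow> nat list \<Rightarrow> 'r::comm_ring_1 mat set" where
  "Pn R ns = {A \<in> mats (sum_list ns). \<forall>i j. forced_zero ns i j \<longrightarrow> A i j = 0}"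

text \<open>The quotient bimodule M_n(R)/P_n(R), realised by canonical representatives:
  proj keeps exactly the entries at the positions forced to vanish in P_n(R);
  its kernel on M_n(R) is P_n(R), so M_n(R)/P_n(R) is identified with the image Qn.\<close>
definition proj :: "nat list \<Rightarrow> 'r::comm_ring_1 mat \<Rightarrow> 'r mat" where
  "proj ns A = (\<lambda>i j. if forced_zero ns i j then A i j else 0)"

definition Qn :: "'r itself \<Rightarrow> nat list \<Rightarrow> 'r::comm_ring_1 mat set" where
  "Qn R ns = proj ns ` mats (sum_list ns)"

definition lact :: "nat list \<Rightarrow> 'r::comm_ring_1 mat \<Rightarrow> 'r mat \<Rightarrow> 'r mat" where
  "lact ns a m = proj ns (mat_mult (sum_list ns) a m)"

definition ract :: "nat list \<Rightarrow> 'r::comm_ring_1 mat \<Rightarrow> 'r mat \<Rightarrow> 'r mat" where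
  "ract ns m a = proj ns (mat_mult (sum_list ns) m a)"

text \<open>An i-tuple is encoded as x :: nat => 'r mat with x k in P_n(R) for k < i and
  x k = 0 for k >= i; cochains are only considered on such tuples.\<close>
definition tuples :: "'r itself \<Rightarrow> nat list \<Rightarrow> nat \<Rightarrow> (nat \<Rightarrow> 'r::comm_ring_1 mat) set" where
  "tuples R ns i = {x. (\<forall>k<i. x k \<in> Pn R ns) \<and> (\<forall>k\<ge>i. x k = mzero)}"

definition cochain :: "'r itself \<Rightarrow> nat list \<Rightarrow> nat \<Rightarrow> ((nat \<Rightarrow> 'r::comm_ring_1 mat) \<Rightarrow> 'r mat) \<Rightarrow> bool" where
  "cochain R ns i f =
     ((\<forall>x\<in>tuples R ns i. f x \<in> Qn R ns) \<and>
      (\<forall>x\<in>tuples R ns i. \<forall>k<i. \<forall>a\<in>Pn R ns. \<forall>b\<in>Pn R ns.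
          f (x(k := madd a b)) = madd (f (x(k := a))) (f (x(k := b)))) \<and>
      (\<forall>x\<in>tuples R ns i. \<forall>k<i. \<forall>a\<in>Pn R ns. \<forall>c::'r.
          f (x(k := msmult c a)) = msmult c (f (x(k := a)))))"

definition merge :: "nat \<Rightarrow> nat \<Rightarrow> (nat \<Rightarrow> 'r::comm_ring_1 mat) \<Rightarrow> nat \<Rightarrow> 'r mat" where
  "merge n k x = (\<lambda>j. if j < k then x j else if j = k then mat_mult n (x k) (x (Suc k)) else x (Suc j))"

definition hoch_d :: "nat list \<Rightarrow> nat \<Rightarrow> ((nat \<Rightarrow> 'r::comm_ring_1 mat) \<Rightarrow> 'r mat)
                      \<Rightarrow> (nat \<Rightarrow> 'r mat) \<Rightarrow> 'r mat" where
  "hoch_d ns i f x = (\<lambda>p q.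
       lact ns (x 0) (f (\<lambda>k. x (Suc k))) p q
     + (\<Sum>k<i. (-1) ^ Suc k * f (merge (sum_list ns) k x) p q)
     + (-1) ^ Suc i * ract ns (f (\<lambda>k. if k < i then x k else mzero)) (x i) p q)"

definition HH_vanishes :: "'r::comm_ring_1 itself \<Rightarrow> nat list \<Rightarrow> nat \<Rightarrow> bool" where
  "HH_vanishes R ns i =
     (\<forall>f. cochain R ns i f \<and> (\<forall>x\<in>tuples R ns (Suc i). hoch_d ns i f x = mzero) \<longrightarrow>
        (if i = 0 then (\<forall>x\<in>tuples R ns 0. f x = mzero)
         else (\<exists>g. cochain R ns (i - 1) g \<and> (\<forall>x\<in>tuples R ns i. f x = hoch_d ns (i - 1) g x))))"

end

theory Submission
  imports Defs
begin


lemma psum_mono: "t \<le> t' \<Longrightarrow> psum ns t \<le> psum ns t'"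
proof -
  assume "t \<le> t'"
  then obtain d where "t' = t + d" by (metis le_add_diff_inverse)
  then show ?thesis by (simp add: psum_def take_add)
qed

lemma psum_le_n: "psum ns t \<le> sum_list ns"
  by (metis append_take_drop_id le_add1 psum_def sum_list_append)

lemma psum_ge_len: "length ns \<le> t \<Longrightarrow> psum ns t = sum_list ns"
  by (simp add: psum_def)

lemma psum_Suc: "t < length ns \<Longrightarrow> psum ns (Suc t) = psum ns t + ns ! t"
  by (simp add: psum_def take_Suc_conv_app_nth)

lemma psum_0[simp]: "psum ns 0 = 0" by (simp add: psum_def)

lemma block_ex:
  assumes "k < sum_list ns"
  shows "\<exists>t<length ns. psum ns t \<le> k \<and> k < psum ns (Suc t)"
proof -
  define t0 where "t0 = (LEAST t. k < psum ns t)"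
  have ex: "k < psum ns (length ns)" using assms psum_ge_len by simp
  have t0: "k < psum ns t0" unfolding t0_def by (rule LeastI, rule ex)
  have t0le: "t0 \<le> length ns" unfolding t0_def by (rule Least_le, rule ex)
  have "t0 \<noteq> 0" using t0 by (metis less_nat_zero_code psum_0)
  then obtain t where tt: "t0 = Suc t" by (cases t0) auto
  have "\<not> k < psum ns t" using tt unfolding t0_def
    by (metis lessI not_less_Least)
  then show ?thesis using t0 tt t0le by (intro exI[of _ t]) auto
qed

lemma fz_iff: "forced_zero ns r c \<longleftrightarrow>
   (\<exists>t<length ns. psum ns t \<le> r \<and> r < psum ns (Suc t) \<and> c < psum ns t)"
  unfolding forced_zero_def by (auto simp: less_Suc_eq_le Suc_le_eq)

lemma fz_block:
  assumes "t < length ns" "psum ns t \<le> r" "r < psum ns (Suc t)"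
  shows "forced_zero ns r c \<longleftrightarrow> c < psum ns t"
proof
  assume "forced_zero ns r c"
  then obtain t' where t': "t' < length ns" "psum ns t' \<le> r" "r < psum ns (Suc t')" "c < psum ns t'"
    using fz_iff by blast
  have "t' = t"
  proof (rule ccontr)
    assume "t' \<noteq> t"
    then have "Suc t' \<le> t \<or> Suc t \<le> t'" by auto
    then show False using psum_mono[of "Suc t'" t ns] psum_mono[of "Suc t" t' ns] t' assms by auto
  qed
  then show "c < psum ns t" using t' by simp
next
  assume "c < psum ns t" then show "forced_zero ns r c" using assms fz_iff by blast
qed

lemma fz_range: "forced_zero ns r c \<Longrightarrow> r < sum_list ns \<and> c < sum_list ns"
  unfolding fz_iff using psum_le_n
  by (metis dual_order.strict_trans1 order.strict_trans2)

lemma fz_not_refl: "\<not> forced_zero ns r r"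
  unfolding fz_iff by auto

lemma fz_ge:
  assumes "psum ns t \<le> d" "d < sum_list ns" "c < psum ns t"
  shows "forced_zero ns d c"
proof -
  obtain t' where t': "t' < length ns" "psum ns t' \<le> d" "d < psum ns (Suc t')"
    using block_ex assms(2) by blast
  have "t \<le> t'"
  proof (rule ccontr)
    assume "\<not> t \<le> t'" then have "Suc t' \<le> t" by simp
    then show False using psum_mono[of "Suc t'" t ns] t' assms by simp
  qed
  then have "c < psum ns t'" using psum_mono[of t t' ns] assms by simp
  then show ?thesis using t' fz_iff by blast
qed

lemma fz_trans:
  assumes "forced_zero ns i j" "\<not> forced_zero ns i k" "k < sum_list ns"
  shows "forced_zero ns k j"
proof -
  obtain t where t: "t < length ns" "psum ns t \<le> i" "i < psum ns (Suc t)" "j < psum ns t"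
    using assms(1) fz_iff by blast
  have "\<not> k < psum ns t" using assms(2) t fz_block by blast
  then show ?thesis using fz_ge[of ns t k j] t assms(3) by simp
qed



definition E :: "nat \<Rightarrow> nat \<Rightarrow> 'r::comm_ring_1 mat" where
  "E a b = (\<lambda>i j. if i = a \<and> j = b then 1 else 0)"

definition msum :: "'i set \<Rightarrow> ('i \<Rightarrow> 'r::comm_ring_1 mat) \<Rightarrow> 'r mat" where
  "msum S v = (\<lambda>i j. \<Sum>d\<in>S. v d i j)"

lemma Pn_iff: "A \<in> Pn R ns \<longleftrightarrow> (\<forall>i j. (sum_list ns \<le> i \<or> sum_list ns \<le> j) \<longrightarrow> A i j = 0) \<and>
   (\<forall>i j. forced_zero ns i j \<longrightarrow> A i j = 0)"
  by (simp add: Pn_def mats_def)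

lemma Qn_iff: "A \<in> Qn R ns \<longleftrightarrow> (\<forall>i j. \<not> forced_zero ns i j \<longrightarrow> A i j = 0)"
proof
  assume "A \<in> Qn R ns"
  then show "\<forall>i j. \<not> forced_zero ns i j \<longrightarrow> A i j = 0" by (auto simp: Qn_def proj_def)
next
  assume h: "\<forall>i j. \<not> forced_zero ns i j \<longrightarrow> A i j = 0"
  have "A \<in> mats (sum_list ns)" unfolding mats_def
  proof (unfold mem_Collect_eq, intro allI impI)
    fix i j assume "sum_list ns \<le> i \<or> sum_list ns \<le> j"
    then have "\<not> forced_zero ns i j" using fz_range[of ns i j] by auto
    then show "A i j = 0" using h by blast
  qed
  moreover have "proj ns A = A" using h by (auto simp: proj_def fun_eq_iff)
  ultimately show "A \<in> Qn R ns" unfolding Qn_def by (metis image_eqI)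
qed

lemma Qn_mats: "A \<in> Qn R ns \<Longrightarrow> A \<in> mats (sum_list ns)"
  unfolding Qn_def proj_def mats_def by (auto simp: fz_range)

lemma lact_eq: "lact ns a m p q = (if forced_zero ns p q then (\<Sum>k<sum_list ns. a p k * m k q) else 0)"
  by (simp add: lact_def proj_def mat_mult_def)

lemma ract_eq: "ract ns m a p q = (if forced_zero ns p q then (\<Sum>k<sum_list ns. m p k * a k q) else 0)"
  by (simp add: ract_def proj_def mat_mult_def)

lemma lact_Q: "lact ns a m \<in> Qn R ns" by (simp add: Qn_iff lact_eq)
lemma ract_Q: "ract ns m a \<in> Qn R ns" by (simp add: Qn_iff ract_eq)

lemma mzero_P: "mzero \<in> Pn R ns" by (simp add: Pn_iff mzero_def)
lemma mzero_Q: "mzero \<in> Qn R ns" by (simp add: Qn_iff mzero_def)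

lemma mult_P:
  assumes a: "a \<in> Pn R ns" and b: "b \<in> Pn R ns"
  shows "mat_mult (sum_list ns) a b \<in> Pn R ns"
  unfolding Pn_iff
proof (intro conjI allI impI)
  fix i j assume "sum_list ns \<le> i \<or> sum_list ns \<le> j"
  then show "mat_mult (sum_list ns) a b i j = 0"
    using a b by (auto simp: Pn_iff mat_mult_def)
next
  fix i j assume f: "forced_zero ns i j"
  have "\<And>k. k < sum_list ns \<Longrightarrow> a i k * b k j = 0"
  proof -
    fix k assume k: "k < sum_list ns"
    show "a i k * b k j = 0"
    proof (cases "forced_zero ns i k")
      case True then show ?thesis using a by (simp add: Pn_iff)
    next
      case False then have "forced_zero ns k j" using fz_trans f k by blast
      then show ?thesis using b by (simp add: Pn_iff)
    qed
  qed
  then show "mat_mult (sum_list ns) a b i j = 0" by (simp add: mat_mult_def)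
qed

lemma mat_mult_assoc: "mat_mult n (mat_mult n a b) c = mat_mult n a (mat_mult n b c)"
proof (rule ext, rule ext)
  fix i j
  have "(\<Sum>k<n. (\<Sum>l<n. a i l * b l k) * c k j) = (\<Sum>k<n. \<Sum>l<n. a i l * b l k * c k j)"
    by (simp add: sum_distrib_right)
  also have "\<dots> = (\<Sum>l<n. \<Sum>k<n. a i l * b l k * c k j)" by (rule sum.swap)
  also have "\<dots> = (\<Sum>l<n. a i l * (\<Sum>k<n. b l k * c k j))" by (simp add: sum_distrib_left mult.assoc)
  finally show "mat_mult n (mat_mult n a b) c i j = mat_mult n a (mat_mult n b c) i j"
    by (simp add: mat_mult_def)
qed

lemma lact_lact:
  assumes a: "a \<in> Pn R ns"
  shows "lact ns a (lact ns b m) = lact ns (mat_mult (sum_list ns) a b) m"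
proof (rule ext, rule ext)
  fix p q
  show "lact ns a (lact ns b m) p q = lact ns (mat_mult (sum_list ns) a b) m p q"
  proof (cases "forced_zero ns p q")
    case False then show ?thesis by (simp add: lact_eq)
  next
    case f: True
    have "(\<Sum>k<sum_list ns. a p k * lact ns b m k q) =
          (\<Sum>k<sum_list ns. a p k * (\<Sum>l<sum_list ns. b k l * m l q))"
    proof (rule sum.cong[OF refl])
      fix k assume "k \<in> {..<sum_list ns}"
      then have k: "k < sum_list ns" by simp
      show "a p k * lact ns b m k q = a p k * (\<Sum>l<sum_list ns. b k l * m l q)"
      proof (cases "forced_zero ns k q")
        case True then show ?thesis by (simp add: lact_eq)
      next
        case False
        then have "forced_zero ns p k" using fz_trans[of ns p q k] f k by blast
        then have "a p k = 0" using a by (simp add: Pn_iff)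
        then show ?thesis by simp
      qed
    qed
    also have "\<dots> = (\<Sum>k<sum_list ns. \<Sum>l<sum_list ns. a p k * b k l * m l q)"
      by (simp add: sum_distrib_left mult.assoc)
    also have "\<dots> = (\<Sum>l<sum_list ns. \<Sum>k<sum_list ns. a p k * b k l * m l q)" by (rule sum.swap)
    also have "\<dots> = (\<Sum>l<sum_list ns. mat_mult (sum_list ns) a b p l * m l q)"
      by (simp add: mat_mult_def sum_distrib_right)
    finally show ?thesis using f by (simp add: lact_eq)
  qed
qed

lemma ract_ract:
  assumes b: "b \<in> Pn R ns"
  shows "ract ns (ract ns m a) b = ract ns m (mat_mult (sum_list ns) a b)"
proof (rule ext, rule ext)
  fix p q
  show "ract ns (ract ns m a) b p q = ract ns m (mat_mult (sum_list ns) a b) p q"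
  proof (cases "forced_zero ns p q")
    case False then show ?thesis by (simp add: ract_eq)
  next
    case f: True
    have "(\<Sum>k<sum_list ns. ract ns m a p k * b k q) =
          (\<Sum>k<sum_list ns. (\<Sum>l<sum_list ns. m p l * a l k) * b k q)"
    proof (rule sum.cong[OF refl])
      fix k assume "k \<in> {..<sum_list ns}"
      then have k: "k < sum_list ns" by simp
      show "ract ns m a p k * b k q = (\<Sum>l<sum_list ns. m p l * a l k) * b k q"
      proof (cases "forced_zero ns p k")
        case True then show ?thesis by (simp add: ract_eq)
      next
        case False
        then have "forced_zero ns k q" using fz_trans[of ns p q k] f k by blast
        then have "b k q = 0" using b by (simp add: Pn_iff)
        then show ?thesis by simp
      qed
    qed
    also have "\<dots> = (\<Sum>k<sum_list ns. \<Sum>l<sum_list ns. m p l * a l k * b k q)"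
      by (simp add: sum_distrib_right)
    also have "\<dots> = (\<Sum>l<sum_list ns. \<Sum>k<sum_list ns. m p l * a l k * b k q)" by (rule sum.swap)
    also have "\<dots> = (\<Sum>l<sum_list ns. m p l * mat_mult (sum_list ns) a b l q)"
      by (simp add: mat_mult_def sum_distrib_left mult.assoc)
    finally show ?thesis using f by (simp add: ract_eq)
  qed
qed

lemma lact_ract:
  assumes a: "a \<in> Pn R ns" and b: "b \<in> Pn R ns"
  shows "lact ns a (ract ns m b) = ract ns (lact ns a m) b"
proof (rule ext, rule ext)
  fix p q
  show "lact ns a (ract ns m b) p q = ract ns (lact ns a m) b p q"
  proof (cases "forced_zero ns p q")
    case False then show ?thesis by (simp add: ract_eq lact_eq)
  next
    case f: True
    have "(\<Sum>k<sum_list ns. a p k * ract ns m b k q) =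
          (\<Sum>k<sum_list ns. a p k * (\<Sum>l<sum_list ns. m k l * b l q))"
    proof (rule sum.cong[OF refl])
      fix k assume "k \<in> {..<sum_list ns}"
      then have k: "k < sum_list ns" by simp
      show "a p k * ract ns m b k q = a p k * (\<Sum>l<sum_list ns. m k l * b l q)"
      proof (cases "forced_zero ns k q")
        case True then show ?thesis by (simp add: ract_eq)
      next
        case False
        then have "forced_zero ns p k" using fz_trans[of ns p q k] f k by blast
        then have "a p k = 0" using a by (simp add: Pn_iff)
        then show ?thesis by simp
      qed
    qed
    also have "\<dots> = (\<Sum>k<sum_list ns. \<Sum>l<sum_list ns. a p k * m k l * b l q)"
      by (simp add: sum_distrib_left mult.assoc)
    also have "\<dots> = (\<Sum>l<sum_list ns. \<Sum>k<sum_list ns. a p k * m k l * b l q)" by (rule sum.swap)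
    also have "\<dots> = (\<Sum>l<sum_list ns. (\<Sum>k<sum_list ns. a p k * m k l) * b l q)"
      by (simp add: sum_distrib_right)
    also have "\<dots> = (\<Sum>l<sum_list ns. lact ns a m p l * b l q)"
    proof (rule sum.cong[OF refl])
      fix l assume "l \<in> {..<sum_list ns}"
      then have l: "l < sum_list ns" by simp
      show "(\<Sum>k<sum_list ns. a p k * m k l) * b l q = lact ns a m p l * b l q"
      proof (cases "forced_zero ns p l")
        case True then show ?thesis by (simp add: lact_eq)
      next
        case False
        then have "forced_zero ns l q" using fz_trans[of ns p q l] f l by blast
        then have "b l q = 0" using b by (simp add: Pn_iff)
        then show ?thesis by simp
      qed
    qed
    finally show ?thesis using f by (simp add: ract_eq lact_eq)
  qed
qed



definition sh :: "(nat \<Rightarrow> 'a) \<Rightarrow> nat \<Rightarrow> 'a" where "sh x = (\<lambda>k. x (Suc k))"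
definition tr :: "nat \<Rightarrow> (nat \<Rightarrow> 'r::comm_ring_1 mat) \<Rightarrow> nat \<Rightarrow> 'r mat" where
  "tr i x = (\<lambda>k. if k < i then x k else mzero)"

lemma hoch_pt: "hoch_d ns i f x p q = lact ns (x 0) (f (sh x)) p q
   + (\<Sum>k<i. (-1) ^ Suc k * f (merge (sum_list ns) k x) p q)
   + (-1) ^ Suc i * ract ns (f (tr i x)) (x i) p q"
  by (simp add: hoch_d_def sh_def tr_def)

lemma hoch_fun: "hoch_d ns i f x = (\<lambda>p q. lact ns (x 0) (f (sh x)) p q
   + (\<Sum>k<i. (-1) ^ Suc k * f (merge (sum_list ns) k x) p q)
   + (-1) ^ Suc i * ract ns (f (tr i x)) (x i) p q)"
  by (simp add: hoch_d_def sh_def tr_def)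

lemma tuples_iff: "x \<in> tuples R ns i \<longleftrightarrow> (\<forall>k<i. x k \<in> Pn R ns) \<and> (\<forall>k\<ge>i. x k = mzero)"
  by (simp add: tuples_def)

lemma tuples_P: "x \<in> tuples R ns i \<Longrightarrow> x k \<in> Pn R ns"
  by (cases "k < i") (auto simp: tuples_iff mzero_P)

lemma tuples_upd: "x \<in> tuples R ns i \<Longrightarrow> k < i \<Longrightarrow> v \<in> Pn R ns \<Longrightarrow> x(k:=v) \<in> tuples R ns i"
  by (auto simp: tuples_iff)

lemma tuples_sh: "x \<in> tuples R ns (Suc i) \<Longrightarrow> sh x \<in> tuples R ns i"
  by (auto simp: tuples_iff sh_def)

lemma tuples_tr: "x \<in> tuples R ns j \<Longrightarrow> i \<le> j \<Longrightarrow> tr i x \<in> tuples R ns i"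
  by (auto simp: tuples_iff tr_def)

lemma tuples_merge:
  assumes x: "x \<in> tuples R ns (Suc i)" and k: "k < i"
  shows "merge (sum_list ns) k x \<in> tuples R ns i"
  unfolding tuples_iff
proof (intro conjI allI impI)
  fix m assume "m < i"
  then show "merge (sum_list ns) k x m \<in> Pn R ns"
    using x k by (auto simp: merge_def tuples_iff intro!: mult_P)
next
  fix m assume "i \<le> m"
  then show "merge (sum_list ns) k x m = mzero" using x k by (auto simp: merge_def tuples_iff)
qed

lemma madd_P: "a \<in> Pn R ns \<Longrightarrow> b \<in> Pn R ns \<Longrightarrow> madd a b \<in> Pn R ns"
  by (simp add: Pn_iff madd_def)
lemma msmult_P: "a \<in> Pn R ns \<Longrightarrow> msmult c a \<in> Pn R ns"
  by (simp add: Pn_iff msmult_def)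
lemma madd_Q: "a \<in> Qn R ns \<Longrightarrow> b \<in> Qn R ns \<Longrightarrow> madd a b \<in> Qn R ns"
  by (simp add: Qn_iff madd_def)
lemma msmult_Q: "a \<in> Qn R ns \<Longrightarrow> msmult c a \<in> Qn R ns"
  by (simp add: Qn_iff msmult_def)

definition lin :: "'r itself \<Rightarrow> nat list \<Rightarrow> ('r::comm_ring_1 mat \<Rightarrow> 'r mat) \<Rightarrow> bool" where
  "lin R ns \<phi> \<longleftrightarrow> (\<forall>a\<in>Pn R ns. \<forall>b\<in>Pn R ns. \<phi> (madd a b) = madd (\<phi> a) (\<phi> b)) \<and>
     (\<forall>a\<in>Pn R ns. \<forall>c. \<phi> (msmult c a) = msmult c (\<phi> a))"

lemma cochain_iff: "cochain R ns i f \<longleftrightarrow> (\<forall>x\<in>tuples R ns i. f x \<in> Qn R ns) \<and>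
   (\<forall>x\<in>tuples R ns i. \<forall>k<i. lin R ns (\<lambda>v. f (x(k:=v))))"
  by (auto simp: cochain_def lin_def)

lemma linI:
  assumes "\<And>a b p q. a \<in> Pn R ns \<Longrightarrow> b \<in> Pn R ns \<Longrightarrow> \<phi> (madd a b) p q = \<phi> a p q + \<phi> b p q"
    and "\<And>a c p q. a \<in> Pn R ns \<Longrightarrow> \<phi> (msmult c a) p q = c * \<phi> a p q"
  shows "lin R ns \<phi>"
  using assms by (auto simp: lin_def madd_def msmult_def fun_eq_iff)

lemma linD1: "lin R ns \<phi> \<Longrightarrow> a \<in> Pn R ns \<Longrightarrow> b \<in> Pn R ns \<Longrightarrow> \<phi> (madd a b) p q = \<phi> a p q + \<phi> b p q"
  by (simp add: lin_def madd_def)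
lemma linD2: "lin R ns \<phi> \<Longrightarrow> a \<in> Pn R ns \<Longrightarrow> \<phi> (msmult c a) p q = c * \<phi> a p q"
  by (simp add: lin_def msmult_def)

lemma lin_cong: "lin R ns \<phi> \<Longrightarrow> (\<And>v. v \<in> Pn R ns \<Longrightarrow> \<psi> v = \<phi> v) \<Longrightarrow> lin R ns \<psi>"
  by (auto simp: lin_def madd_P msmult_P)

lemma lin_cochain: "cochain R ns i f \<Longrightarrow> y \<in> tuples R ns i \<Longrightarrow> k < i \<Longrightarrow> lin R ns (\<lambda>v. f (y(k:=v)))"
  by (simp add: cochain_iff)

lemma lin_lact2: "lin R ns \<phi> \<Longrightarrow> lin R ns (\<lambda>v. lact ns a (\<phi> v))"
  by (rule linI) (simp_all add: lact_eq linD1 linD2 distrib_left sum.distrib sum_distrib_left mult.left_commute)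

lemma lin_ract1: "lin R ns \<phi> \<Longrightarrow> lin R ns (\<lambda>v. ract ns (\<phi> v) b)"
  by (rule linI) (simp_all add: ract_eq linD1 linD2 distrib_right sum.distrib sum_distrib_left mult.assoc)

lemma lin_lact1: "lin R ns (\<lambda>v. lact ns v m)"
  by (rule linI) (simp_all add: lact_eq madd_def msmult_def distrib_right sum.distrib sum_distrib_left mult.assoc)

lemma lin_ract2: "lin R ns (\<lambda>v. ract ns m v)"
  by (rule linI) (simp_all add: ract_eq madd_def msmult_def distrib_left sum.distrib sum_distrib_left mult.left_commute)

lemma mult_madd_l: "mat_mult n (madd a b) B = madd (mat_mult n a B) (mat_mult n b B)"
  by (simp add: mat_mult_def madd_def fun_eq_iff distrib_right sum.distrib)
lemma mult_msmult_l: "mat_mult n (msmult c a) B = msmult c (mat_mult n a B)"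
  by (simp add: mat_mult_def msmult_def fun_eq_iff sum_distrib_left mult.assoc)
lemma mult_madd_r: "mat_mult n B (madd a b) = madd (mat_mult n B a) (mat_mult n B b)"
  by (simp add: mat_mult_def madd_def fun_eq_iff distrib_left sum.distrib)
lemma mult_msmult_r: "mat_mult n B (msmult c a) = msmult c (mat_mult n B a)"
  by (simp add: mat_mult_def msmult_def fun_eq_iff sum_distrib_left mult.left_commute)

lemma lin_mult_r:
  assumes "lin R ns \<phi>" "B \<in> Pn R ns"
  shows "lin R ns (\<lambda>v. \<phi> (mat_mult (sum_list ns) v B))"
  using assms unfolding lin_def
  by (simp add: mult_madd_l mult_msmult_l mult_P)

lemma lin_mult_l:
  assumes "lin R ns \<phi>" "B \<in> Pn R ns"
  shows "lin R ns (\<lambda>v. \<phi> (mat_mult (sum_list ns) B v))"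
  using assms unfolding lin_def
  by (simp add: mult_madd_r mult_msmult_r mult_P)

lemma lin_combo:
  assumes "finite K" "lin R ns \<phi>1" "\<And>l. l \<in> K \<Longrightarrow> lin R ns (\<psi> l)" "lin R ns \<phi>3"
  shows "lin R ns (\<lambda>v p q. \<phi>1 v p q + (\<Sum>l\<in>K. c l * \<psi> l v p q) + d * \<phi>3 v p q)"
proof (rule linI)
  fix a b p q assume a: "a \<in> Pn R ns" and b: "b \<in> Pn R ns"
  have "(\<Sum>l\<in>K. c l * \<psi> l (madd a b) p q) = (\<Sum>l\<in>K. c l * \<psi> l a p q) + (\<Sum>l\<in>K. c l * \<psi> l b p q)"
    by (simp add: sum.distrib[symmetric] distrib_left linD1[OF assms(3) a b])
  then show "\<phi>1 (madd a b) p q + (\<Sum>l\<in>K. c l * \<psi> l (madd a b) p q) + d * \<phi>3 (madd a b) p q =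
    \<phi>1 a p q + (\<Sum>l\<in>K. c l * \<psi> l a p q) + d * \<phi>3 a p q +
    (\<phi>1 b p q + (\<Sum>l\<in>K. c l * \<psi> l b p q) + d * \<phi>3 b p q)"
    using linD1[OF assms(2) a b] linD1[OF assms(4) a b] by (simp add: algebra_simps)
next
  fix a e p q assume a: "a \<in> Pn R ns"
  have "(\<Sum>l\<in>K. c l * \<psi> l (msmult e a) p q) = e * (\<Sum>l\<in>K. c l * \<psi> l a p q)"
    by (simp add: sum_distrib_left linD2[OF assms(3) a] mult.left_commute)
  then show "\<phi>1 (msmult e a) p q + (\<Sum>l\<in>K. c l * \<psi> l (msmult e a) p q) + d * \<phi>3 (msmult e a) p q =
    e * (\<phi>1 a p q + (\<Sum>l\<in>K. c l * \<psi> l a p q) + d * \<phi>3 a p q)"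
    using linD2[OF assms(2) a] linD2[OF assms(4) a] by (simp add: algebra_simps)
qed

lemma merge_upd_lt: "k < l \<Longrightarrow> merge n l (x(k:=v)) = (merge n l x)(k := v)"
  by (auto simp: merge_def fun_eq_iff)
lemma merge_upd_eq: "merge n l (x(l:=v)) = (merge n l x)(l := mat_mult n v (x (Suc l)))"
  by (auto simp: merge_def fun_eq_iff)
lemma merge_upd_Suc: "merge n l (x(Suc l:=v)) = (merge n l x)(l := mat_mult n (x l) v)"
  by (auto simp: merge_def fun_eq_iff)
lemma merge_upd_gt: "Suc l < k \<Longrightarrow> merge n l (x(k:=v)) = (merge n l x)(k - 1 := v)"
  by (auto simp: merge_def fun_eq_iff)
lemma sh_upd0: "sh (x(0:=v)) = sh x" by (simp add: sh_def fun_eq_iff)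
lemma sh_updS: "sh (x(Suc k:=v)) = (sh x)(k := v)" by (simp add: sh_def fun_eq_iff)
lemma tr_upd_lt: "k < i \<Longrightarrow> tr i (x(k:=v)) = (tr i x)(k := v)" by (auto simp: tr_def fun_eq_iff)
lemma tr_upd_eq: "tr i (x(i:=v)) = tr i x" by (auto simp: tr_def fun_eq_iff)

lemma hoch_multilin:
  assumes f: "cochain R ns i f" and x: "x \<in> tuples R ns (Suc i)" and k: "k < Suc i"
  shows "lin R ns (\<lambda>v. hoch_d ns i f (x(k:=v)))"
proof -
  let ?n = "sum_list ns"
  define A where "A = (\<lambda>v. lact ns ((x(k:=v)) 0) (f (sh (x(k:=v)))))"
  define B where "B = (\<lambda>l v. f (merge ?n l (x(k:=v))))"
  define C where "C = (\<lambda>v. ract ns (f (tr i (x(k:=v)))) ((x(k:=v)) i))"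
  have eq: "(\<lambda>v. hoch_d ns i f (x(k:=v))) =
     (\<lambda>v p q. A v p q + (\<Sum>l\<in>{..<i}. (-1) ^ Suc l * B l v p q) + (-1) ^ Suc i * C v p q)"
    unfolding A_def B_def C_def by (simp add: hoch_fun)
  have linA: "lin R ns A"
  proof (cases k)
    case 0
    then show ?thesis unfolding A_def by (simp add: sh_upd0 lin_lact1)
  next
    case (Suc k')
    have "lin R ns (\<lambda>v. f ((sh x)(k' := v)))"
      using lin_cochain[OF f tuples_sh[OF x]] Suc k by simp
    then show ?thesis unfolding A_def using Suc by (simp add: sh_updS lin_lact2)
  qed
  have linB: "lin R ns (B l)" if l: "l \<in> {..<i}" for l
  proof -
    have l': "l < i" using l by simp
    have y: "merge ?n l x \<in> tuples R ns i" using tuples_merge[OF x l'] .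
    consider "k < l" | "k = l" | "k = Suc l" | "Suc l < k" by linarith
    then show ?thesis
    proof cases
      case 1 then show ?thesis unfolding B_def using lin_cochain[OF f y, of k] l'
        by (simp add: merge_upd_lt)
    next
      case 2 then show ?thesis unfolding B_def
        using lin_mult_r[OF lin_cochain[OF f y l'] tuples_P[OF x, of "Suc l"]]
        by (simp add: merge_upd_eq)
    next
      case 3 then show ?thesis unfolding B_def
        using lin_mult_l[OF lin_cochain[OF f y l'] tuples_P[OF x, of l]]
        by (simp add: merge_upd_Suc)
    next
      case 4 then show ?thesis unfolding B_def using lin_cochain[OF f y, of "k - 1"] k
        by (simp add: merge_upd_gt)
    qed
  qed
  have linC: "lin R ns C"
  proof (cases "k = i")
    case True then show ?thesis unfolding C_def by (simp add: tr_upd_eq lin_ract2)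
  next
    case False
    then have "k < i" using k by simp
    then show ?thesis unfolding C_def
      using lin_ract1[OF lin_cochain[OF f tuples_tr[OF x, of i] \<open>k < i\<close>]]
      by (simp add: tr_upd_lt)
  qed
  show ?thesis unfolding eq by (rule lin_combo[OF _ linA linB linC]) auto
qed



lemma hoch_Q:
  assumes g: "\<forall>y\<in>tuples R ns i. g y \<in> Qn R ns" and x: "x \<in> tuples R ns (Suc i)"
  shows "hoch_d ns i g x \<in> Qn R ns"
proof -
  have "\<And>k. k < i \<Longrightarrow> g (merge (sum_list ns) k x) \<in> Qn R ns"
    using g tuples_merge[OF x] by blast
  then show ?thesis unfolding Qn_iff by (auto simp: hoch_pt lact_eq ract_eq Qn_iff)
qed

lemma hoch_cochain:
  assumes f: "cochain R ns i f"
  shows "cochain R ns (Suc i) (hoch_d ns i f)"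
  unfolding cochain_iff
proof (intro conjI ballI allI impI)
  fix x assume "x \<in> tuples R ns (Suc i)"
  then show "hoch_d ns i f x \<in> Qn R ns" using hoch_Q f cochain_iff by blast
next
  fix x k assume "x \<in> tuples R ns (Suc i)" "k < Suc i"
  then show "lin R ns (\<lambda>v. hoch_d ns i f (x(k := v)))" using hoch_multilin f by blast
qed

lemma lact_comb: "finite K \<Longrightarrow> lact ns a (\<lambda>p q. X p q + (\<Sum>k\<in>K. c k * Y k p q) + d * Z p q) p q =
   lact ns a X p q + (\<Sum>k\<in>K. c k * lact ns a (Y k) p q) + d * lact ns a Z p q"
  by (simp add: lact_eq distrib_left sum.distrib sum_distrib_left mult.left_commute
        sum.swap[of _ K] )

lemma ract_comb: "finite K \<Longrightarrow> ract ns (\<lambda>p q. X p q + (\<Sum>k\<in>K. c k * Y k p q) + d * Z p q) b p q =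
   ract ns X b p q + (\<Sum>k\<in>K. c k * ract ns (Y k) b p q) + d * ract ns Z b p q"
  by (simp add: ract_eq distrib_right sum.distrib sum_distrib_left sum_distrib_right mult.assoc
        sum.swap[of _ K])



lemma hoch_comb: "hoch_d ns i (\<lambda>x. madd (F x) (msmult c (G x))) y =
   madd (hoch_d ns i F y) (msmult c (hoch_d ns i G y))"
proof (rule ext, rule ext)
  fix p q
  have l: "lact ns a (\<lambda>i j. M i j + c * N i j) p q = lact ns a M p q + c * lact ns a N p q" for a M N
    by (simp add: lact_eq distrib_left sum.distrib sum_distrib_left mult.left_commute)
  have r: "ract ns (\<lambda>i j. M i j + c * N i j) b p q = ract ns M b p q + c * ract ns N b p q" for b M N
    by (simp add: ract_eq distrib_right sum.distrib sum_distrib_left mult.assoc)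
  have "hoch_d ns i (\<lambda>x. madd (F x) (msmult c (G x))) y p q =
    lact ns (y 0) (\<lambda>i j. F (sh y) i j + c * G (sh y) i j) p q +
    (\<Sum>k<i. (-1) ^ Suc k * (F (merge (sum_list ns) k y) p q + c * G (merge (sum_list ns) k y) p q)) +
    (-1) ^ Suc i * ract ns (\<lambda>i' j. F (tr i y) i' j + c * G (tr i y) i' j) (y i) p q"
    by (simp only: hoch_pt madd_def msmult_def)
  also have "(\<Sum>k<i. (-1) ^ Suc k * (F (merge (sum_list ns) k y) p q + c * G (merge (sum_list ns) k y) p q))
     = (\<Sum>k<i. (-1) ^ Suc k * F (merge (sum_list ns) k y) p q) + c * (\<Sum>k<i. (-1) ^ Suc k * G (merge (sum_list ns) k y) p q)"
    unfolding sum_distrib_left sum.distrib[symmetric] by (rule sum.cong) (simp_all add: algebra_simps)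
  also have "lact ns (y 0) (\<lambda>i j. F (sh y) i j + c * G (sh y) i j) p q +
    ((\<Sum>k<i. (-1) ^ Suc k * F (merge (sum_list ns) k y) p q) + c * (\<Sum>k<i. (-1) ^ Suc k * G (merge (sum_list ns) k y) p q)) +
    (-1) ^ Suc i * ract ns (\<lambda>i' j. F (tr i y) i' j + c * G (tr i y) i' j) (y i) p q
    = madd (hoch_d ns i F y) (msmult c (hoch_d ns i G y)) p q"
    by (simp only: l r) (simp add: hoch_pt madd_def msmult_def algebra_simps)
  finally show "hoch_d ns i (\<lambda>x. madd (F x) (msmult c (G x))) y p q =
   madd (hoch_d ns i F y) (msmult c (hoch_d ns i G y)) p q" .
qed

lemma hoch_zero: "hoch_d ns i (\<lambda>x. mzero) y = mzero"
  by (rule ext, rule ext) (simp add: hoch_pt lact_eq ract_eq mzero_def)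

lemma merge_merge: "l < k \<Longrightarrow> merge n l (merge n k x) = merge n (k - 1) (merge n l x)"
  by (auto simp: merge_def fun_eq_iff mat_mult_assoc)

lemma merge0_0: "merge n 0 x 0 = mat_mult n (x 0) (x 1)" by (simp add: merge_def)
lemma sh_merge0: "sh (merge n 0 x) = sh (sh x)" by (simp add: merge_def sh_def fun_eq_iff)
lemma mergeS_0: "merge n (Suc k) x 0 = x 0" by (simp add: merge_def)
lemma sh_mergeS: "sh (merge n (Suc k) x) = merge n k (sh x)"
  by (auto simp: merge_def sh_def fun_eq_iff)
lemma tr_merge: "k < i \<Longrightarrow> tr i (merge n k x) = merge n k (tr (Suc i) x)"
  by (auto simp: merge_def tr_def fun_eq_iff)
lemma merge_i: "k < i \<Longrightarrow> merge n k x i = x (Suc i)" by (simp add: merge_def)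
lemma tr_merge_eq: "tr i (merge n i x) = tr i x" by (auto simp: merge_def tr_def fun_eq_iff)
lemma merge_eq_i: "merge n i x i = mat_mult n (x i) (x (Suc i))" by (simp add: merge_def)
lemma tr_tr: "tr i (tr (Suc i) x) = tr i x" by (auto simp: tr_def fun_eq_iff)
lemma tr_Suc_i: "tr (Suc i) x i = x i" by (simp add: tr_def)
lemma tr_Suc_0: "tr (Suc i) x 0 = x 0" by (simp add: tr_def)
lemma sh_tr: "sh (tr (Suc i) x) = tr i (sh x)" by (auto simp: sh_def tr_def fun_eq_iff)
lemma sh_i: "sh x i = x (Suc i)" by (simp add: sh_def)
lemma sh_0: "sh x 0 = x 1" by (simp add: sh_def)

lemma double_sum_zero:
  fixes T :: "nat \<Rightarrow> nat \<Rightarrow> 'a::ab_group_add"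
  assumes anti: "\<And>k l. l < k \<Longrightarrow> k \<le> i \<Longrightarrow> T l (k - 1) = - T k l"
  shows "(\<Sum>k<Suc i. \<Sum>l<i. T k l) = 0"
proof -
  define A where "A = {..<Suc i} \<times> {..<i}"
  define R1 where "R1 = {(k, l). k < Suc i \<and> l < i \<and> l < k}"
  define R2 where "R2 = {(k, l). k < Suc i \<and> l < i \<and> k \<le> l}"
  have fin1: "finite R1" unfolding R1_def
    by (rule finite_subset[of _ "{..<Suc i} \<times> {..<i}"]) auto
  have fin2: "finite R2" unfolding R2_def
    by (rule finite_subset[of _ "{..<Suc i} \<times> {..<i}"]) auto
  have AU: "A = R1 \<union> R2" unfolding A_def R1_def R2_def by auto
  have dis: "R1 \<inter> R2 = {}" unfolding R1_def R2_def by auto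
  have "(\<Sum>k<Suc i. \<Sum>l<i. T k l) = (\<Sum>(k,l)\<in>A. T k l)"
    unfolding A_def by (simp add: sum.cartesian_product)
  also have "\<dots> = (\<Sum>(k,l)\<in>R1. T k l) + (\<Sum>(k,l)\<in>R2. T k l)"
    unfolding AU by (rule sum.union_disjoint[OF fin1 fin2 dis])
  also have "(\<Sum>(k,l)\<in>R2. T k l) = (\<Sum>(k,l)\<in>R1. T l (k - 1))"
  proof -
    have bij: "bij_betw (\<lambda>(k,l). (l, k - 1)) R1 R2"
      by (rule bij_betw_byWitness[where f' = "\<lambda>(k,l). (Suc l, k)"])
         (auto simp: R1_def R2_def)
    have "(\<Sum>(k,l)\<in>R2. T k l) = (\<Sum>x\<in>R1. (\<lambda>(k,l). T k l) ((\<lambda>(k,l). (l, k - 1)) x))"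
      by (rule sum.reindex_bij_betw[OF bij, symmetric])
    also have "\<dots> = (\<Sum>(k,l)\<in>R1. T l (k - 1))"
      by (rule sum.cong) auto
    finally show ?thesis .
  qed
  also have "(\<Sum>(k,l)\<in>R1. T l (k - 1)) = (\<Sum>(k,l)\<in>R1. - T k l)"
  proof (rule sum.cong[OF refl])
    fix z assume "z \<in> R1"
    then obtain k l where z: "z = (k, l)" "l < k" "k \<le> i" unfolding R1_def by auto
    then show "(case z of (k, l) \<Rightarrow> T l (k - 1)) = (case z of (k, l) \<Rightarrow> - T k l)"
      using anti by simp
  qed
  finally show ?thesis by (simp add: sum_negf case_prod_beta)
qed



lemma lact_hoch: "lact ns a (hoch_d ns i g y) p q =
   lact ns a (lact ns (y 0) (g (sh y))) p q
   + (\<Sum>k<i. (-1) ^ Suc k * lact ns a (g (merge (sum_list ns) k y)) p q)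
   + (-1) ^ Suc i * lact ns a (ract ns (g (tr i y)) (y i)) p q"
  unfolding hoch_fun by (rule lact_comb) simp

lemma ract_hoch: "ract ns (hoch_d ns i g y) b p q =
   ract ns (lact ns (y 0) (g (sh y))) b p q
   + (\<Sum>k<i. (-1) ^ Suc k * ract ns (g (merge (sum_list ns) k y)) b p q)
   + (-1) ^ Suc i * ract ns (ract ns (g (tr i y)) (y i)) b p q"
  unfolding hoch_fun by (rule ract_comb) simp

lemma dd:
  assumes x: "x \<in> tuples R ns (Suc (Suc i))"
  shows "hoch_d ns (Suc i) (hoch_d ns i g) x = mzero"
proof (rule ext, rule ext)
  fix p q
  let ?n = "sum_list ns"
  have x0: "x 0 \<in> Pn R ns" and xS: "x (Suc i) \<in> Pn R ns" using tuples_P[OF x] by auto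
  define a1 where "a1 = lact ns (x 0) (lact ns (x 1) (g (sh (sh x)))) p q"
  define a2 where "a2 k = lact ns (x 0) (g (merge ?n k (sh x))) p q" for k
  define a3 where "a3 = lact ns (x 0) (ract ns (g (tr i (sh x))) (x (Suc i))) p q"
  define b1 where "b1 k = lact ns (merge ?n k x 0) (g (sh (merge ?n k x))) p q" for k
  define b2 where "b2 k l = g (merge ?n l (merge ?n k x)) p q" for k l
  define b3 where "b3 k = ract ns (g (tr i (merge ?n k x))) (merge ?n k x i) p q" for k
  define c2 where "c2 k = ract ns (g (merge ?n k (tr (Suc i) x))) (x (Suc i)) p q" for k
  define c3 where "c3 = ract ns (g (tr i x)) (mat_mult ?n (x i) (x (Suc i))) p q"
  define A2 where "A2 = (\<Sum>k<i. (-1) ^ Suc k * a2 k)"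
  define C2 where "C2 = (\<Sum>k<i. (-1) ^ Suc k * c2 k)"
  have E1: "lact ns (x 0) (hoch_d ns i g (sh x)) p q = a1 + A2 + (-1) ^ Suc i * a3"
    unfolding lact_hoch a1_def A2_def a2_def a3_def by (simp add: sh_0 sh_i)
  have E2: "hoch_d ns i g (merge ?n k x) p q = b1 k + (\<Sum>l<i. (-1) ^ Suc l * b2 k l) + (-1) ^ Suc i * b3 k" for k
    unfolding hoch_pt b1_def b2_def b3_def by simp
  have c1: "ract ns (lact ns (x 0) (g (tr i (sh x)))) (x (Suc i)) p q = a3"
    unfolding a3_def using lact_ract[OF x0 xS] by simp
  have c3': "ract ns (ract ns (g (tr i x)) (x i)) (x (Suc i)) p q = c3"
    unfolding c3_def using ract_ract[OF xS] by simp
  have E3: "ract ns (hoch_d ns i g (tr (Suc i) x)) (x (Suc i)) p q = a3 + C2 + (-1) ^ Suc i * c3"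
    unfolding ract_hoch C2_def c2_def
    by (simp add: tr_Suc_0 sh_tr tr_tr tr_Suc_i c1 c3')
  have R1: "b1 0 = a1"
    unfolding a1_def b1_def using lact_lact[OF x0] by (simp add: merge0_0 sh_merge0)
  have R2: "b1 (Suc k) = a2 k" for k
    unfolding a2_def b1_def by (simp add: mergeS_0 sh_mergeS)
  have R4: "k < i \<Longrightarrow> b3 k = c2 k" for k
    unfolding b3_def c2_def by (simp add: tr_merge merge_i)
  have R5: "b3 i = c3"
    unfolding b3_def c3_def by (simp add: tr_merge_eq merge_eq_i)
  have S1: "(\<Sum>k<Suc i. (-1) ^ Suc k * b1 k) = - a1 - A2"
    unfolding sum.lessThan_Suc_shift A2_def by (simp add: R1 R2 sum_negf)
  have S3: "(\<Sum>k<Suc i. (-1) ^ Suc k * ((-1) ^ Suc i * b3 k)) = (-1) ^ Suc i * C2 + (-1) ^ Suc i * ((-1) ^ Suc i * c3)"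
    unfolding sum.lessThan_Suc C2_def by (simp add: R4 R5 sum_distrib_left algebra_simps)
  have S2: "(\<Sum>k<Suc i. (-1) ^ Suc k * (\<Sum>l<i. (-1) ^ Suc l * b2 k l)) = 0"
  proof -
    have "(\<Sum>k<Suc i. (-1) ^ Suc k * (\<Sum>l<i. (-1) ^ Suc l * b2 k l)) =
          (\<Sum>k<Suc i. \<Sum>l<i. (-1) ^ Suc k * ((-1) ^ Suc l * b2 k l))"
      by (simp add: sum_distrib_left)
    also have "\<dots> = 0"
    proof (rule double_sum_zero)
      fix k l :: nat assume lk: "l < k" "k \<le> i"
      then obtain k' where k': "k = Suc k'" by (cases k) auto
      have "b2 l (k - 1) = b2 k l" unfolding b2_def using merge_merge[OF lk(1), of ?n x] by simp
      then show "(-1) ^ Suc l * ((-1) ^ Suc (k - 1) * b2 l (k - 1)) =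
            - ((-1) ^ Suc k * ((-1) ^ Suc l * b2 k l))" using k' by (simp add: algebra_simps)
    qed
    finally show ?thesis .
  qed
  have "hoch_d ns (Suc i) (hoch_d ns i g) x p q =
     lact ns (x 0) (hoch_d ns i g (sh x)) p q
     + (\<Sum>k<Suc i. (-1) ^ Suc k * hoch_d ns i g (merge ?n k x) p q)
     + (-1) ^ Suc (Suc i) * ract ns (hoch_d ns i g (tr (Suc i) x)) (x (Suc i)) p q"
    by (simp only: hoch_pt)
  also have "(\<Sum>k<Suc i. (-1) ^ Suc k * hoch_d ns i g (merge ?n k x) p q) =
     (\<Sum>k<Suc i. (-1) ^ Suc k * b1 k) + (\<Sum>k<Suc i. (-1) ^ Suc k * (\<Sum>l<i. (-1) ^ Suc l * b2 k l))
     + (\<Sum>k<Suc i. (-1) ^ Suc k * ((-1) ^ Suc i * b3 k))"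
    by (simp only: E2 distrib_left sum.distrib)
  finally show "hoch_d ns (Suc i) (hoch_d ns i g) x p q = mzero p q"
    unfolding E1 E3 S1 S2 S3 by (simp add: mzero_def algebra_simps)
qed



lemma msum_P: "(\<And>d. d \<in> S \<Longrightarrow> v d \<in> Pn R ns) \<Longrightarrow> msum S v \<in> Pn R ns"
  by (auto simp: Pn_iff msum_def intro!: sum.neutral)

lemma msum_empty: "msum {} v = mzero" by (simp add: msum_def mzero_def)
lemma msum_insert: "finite S \<Longrightarrow> d \<notin> S \<Longrightarrow> msum (insert d S) v = madd (v d) (msum S v)"
  by (simp add: msum_def madd_def)

lemma lin_zero: "lin R ns \<phi> \<Longrightarrow> \<phi> mzero = mzero"
proof -
  assume l: "lin R ns \<phi>"
  have mp: "mzero \<in> Pn R ns" by (rule mzero_P)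
  have "\<phi> (msmult 0 mzero) = msmult 0 (\<phi> mzero)" using l mp unfolding lin_def by blast
  moreover have "msmult 0 mzero = (mzero :: 'a mat)" by (simp add: msmult_def mzero_def)
  ultimately show ?thesis by (simp add: msmult_def mzero_def)
qed

lemma lin_msum:
  assumes l: "lin R ns \<phi>" and fin: "finite S" and v: "\<And>d. d \<in> S \<Longrightarrow> v d \<in> Pn R ns"
  shows "\<phi> (msum S (\<lambda>d. msmult (cc d) (v d))) = msum S (\<lambda>d. msmult (cc d) (\<phi> (v d)))"
  using fin v
proof (induction S rule: finite_induct)
  case empty then show ?case using lin_zero[OF l] by (simp add: msum_empty)
next
  case (insert d S)
  have P1: "msmult (cc d) (v d) \<in> Pn R ns" using insert msmult_P by blast
  have P2: "msum S (\<lambda>d. msmult (cc d) (v d)) \<in> Pn R ns" using insert msmult_P by (blast intro: msum_P)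
  have "\<phi> (msum (insert d S) (\<lambda>d. msmult (cc d) (v d))) =
     madd (\<phi> (msmult (cc d) (v d))) (\<phi> (msum S (\<lambda>d. msmult (cc d) (v d))))"
    using l P1 P2 unfolding lin_def msum_insert[OF insert(1,2)] by blast
  also have "\<dots> = madd (msmult (cc d) (\<phi> (v d))) (msum S (\<lambda>d. msmult (cc d) (\<phi> (v d))))"
  proof -
    have "\<phi> (msmult (cc d) (v d)) = msmult (cc d) (\<phi> (v d))" using l insert(4)[of d] unfolding lin_def by blast
    then show ?thesis using insert by simp
  qed
  finally show ?case unfolding msum_insert[OF insert(1,2)] .
qed

lemma lin_add:
  assumes l1: "lin R ns \<phi>" and l2: "lin R ns \<psi>"
  shows "lin R ns (\<lambda>v. madd (\<phi> v) (msmult c (\<psi> v)))"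
proof (rule linI)
  fix a b p q assume a: "a \<in> Pn R ns" and b: "b \<in> Pn R ns"
  show "madd (\<phi> (madd a b)) (msmult c (\<psi> (madd a b))) p q =
    madd (\<phi> a) (msmult c (\<psi> a)) p q + madd (\<phi> b) (msmult c (\<psi> b)) p q"
    using linD1[OF l1 a b, of p q] linD1[OF l2 a b, of p q] by (simp add: algebra_simps madd_def msmult_def)
next
  fix a e p q assume a: "a \<in> Pn R ns"
  show "madd (\<phi> (msmult e a)) (msmult c (\<psi> (msmult e a))) p q = e * madd (\<phi> a) (msmult c (\<psi> a)) p q"
    using linD2[OF l1 a, of e p q] linD2[OF l2 a, of e p q] by (simp add: algebra_simps madd_def msmult_def)
qed

lemma cochain_comb:
  assumes "cochain R ns i F" "cochain R ns i G"
  shows "cochain R ns i (\<lambda>x. madd (F x) (msmult c (G x)))"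
  using assms unfolding cochain_iff
  by (auto intro!: madd_Q msmult_Q lin_add)

lemma cochain_zero: "cochain R ns i (\<lambda>x. mzero)"
  unfolding cochain_iff by (auto simp: Qn_iff lin_def madd_def msmult_def mzero_def)

lemma E_P:
  assumes "t \<le> length ns" "c < psum ns t" "psum ns (t - 1) \<le> z" "z < psum ns t"
  shows "E c z \<in> Pn R ns"
  unfolding Pn_iff
proof (intro conjI allI impI)
  have n: "psum ns t \<le> sum_list ns" by (rule psum_le_n)
  fix i j assume "sum_list ns \<le> i \<or> sum_list ns \<le> j"
  then show "E c z i j = 0" using assms n by (auto simp: E_def)
next
  fix i j assume fz: "forced_zero ns i j"
  show "E c z i j = 0"
  proof (rule ccontr)
    assume "E c z i j \<noteq> 0"
    then have ij: "i = c" "j = z" by (auto simp: E_def split: if_splits)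
    obtain t' where t': "t' < length ns" "psum ns t' \<le> c" "c < psum ns (Suc t')" "z < psum ns t'"
      using fz ij fz_iff by blast
    have "t' < t"
    proof (rule ccontr)
      assume "\<not> t' < t" then show False using psum_mono[of t t' ns] t' assms by simp
    qed
    then have "t' \<le> t - 1" by simp
    then show False using psum_mono[of t' "t - 1" ns] t' assms by simp
  qed
qed

lemma sum_E_col: "c < n \<Longrightarrow> (\<Sum>k<n. m p k * E c z k q) = (if q = z then m p c else 0)"
  by (simp add: E_def if_distrib[of "\<lambda>x. m p _ * x"] cong: if_cong)



definition gk :: "nat list \<Rightarrow> nat \<Rightarrow> nat \<Rightarrow> ((nat \<Rightarrow> 'r::comm_ring_1 mat) \<Rightarrow> 'r mat) \<Rightarrow> (nat \<Rightarrow> 'r mat) \<Rightarrow> 'r mat" where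
  "gk ns t j f x = (\<lambda>r c. if psum ns t \<le> r \<and> r < psum ns (Suc t) \<and> c < psum ns t
       then (-1) ^ Suc j * f (x(j := E c (psum ns t - 1))) r (psum ns t - 1) else 0)"

lemma z_facts:
  assumes pos: "\<forall>m\<in>set ns. 0 < m" and t: "0 < t" "t < length ns"
  shows "psum ns (t - 1) \<le> psum ns t - 1" "psum ns t - 1 < psum ns t"
proof -
  have "t - 1 < length ns" using t by simp
  then have eq: "psum ns t = psum ns (t - 1) + ns ! (t - 1)" using psum_Suc[of "t - 1" ns] t by simp
  have "ns ! (t - 1) > 0" using pos \<open>t - 1 < length ns\<close> by (simp add: nth_mem)
  then show "psum ns (t - 1) \<le> psum ns t - 1" "psum ns t - 1 < psum ns t" using eq by auto
qed

lemma gk_cochain: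
  assumes pos: "\<forall>m\<in>set ns. 0 < m" and t: "0 < t" "t < length ns"
    and f: "cochain R ns (Suc j) f"
  shows "cochain R ns j (gk ns t j f)"
  unfolding cochain_iff
proof (intro conjI ballI allI impI)
  fix x assume x: "x \<in> tuples R ns j"
  show "gk ns t j f x \<in> Qn R ns"
    unfolding Qn_iff gk_def using fz_block[OF t(2)] by auto
next
  fix x k assume x: "x \<in> tuples R ns j" and k: "k < j"
  let ?z = "psum ns t - 1"
  have EP: "c < psum ns t \<Longrightarrow> E c ?z \<in> Pn R ns" for c
    using E_P[of t ns c ?z] z_facts[OF pos t] t by simp
  have tup: "c < psum ns t \<Longrightarrow> x(j := E c ?z) \<in> tuples R ns (Suc j)" for c
    using x EP by (auto simp: tuples_iff)
  have L: "c < psum ns t \<Longrightarrow> lin R ns (\<lambda>v. f ((x(j := E c ?z))(k := v)))" for c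
    using lin_cochain[OF f tup, of c k] k by simp
  have upd: "(x(k := v))(j := e) = (x(j := e))(k := v)" for v e using k by auto
  show "lin R ns (\<lambda>v. gk ns t j f (x(k := v)))"
  proof (rule linI)
    fix a b p q assume a: "a \<in> Pn R ns" and b: "b \<in> Pn R ns"
    show "gk ns t j f (x(k := madd a b)) p q = gk ns t j f (x(k := a)) p q + gk ns t j f (x(k := b)) p q"
      using linD1[OF L a b, of q p ?z] by (simp add: gk_def upd algebra_simps)
  next
    fix a c p q assume a: "a \<in> Pn R ns"
    show "gk ns t j f (x(k := msmult c a)) p q = c * gk ns t j f (x(k := a)) p q"
      using linD2[OF L a, of q c p ?z] by (simp add: gk_def upd algebra_simps)
  qed
qed



lemma sum_delta_mult: "finite S \<Longrightarrow> (\<Sum>d\<in>S. a d * (if p = d then 1 else 0)) = (if p \<in> S then a p else (0::'a::comm_ring_1))"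
proof -
  assume fin: "finite S"
  have e: "(\<lambda>d. a d * (if p = d then 1 else 0)) = (\<lambda>d. if p = d then a d else 0)" by auto
  show ?thesis by (simp only: e sum.delta'[OF fin])
qed

lemma key_identity:
  assumes pos: "\<forall>m\<in>set ns. 0 < m" and t: "0 < t" "t < length ns"
    and f: "cochain R ns (Suc j) f"
    and cyc: "\<forall>y\<in>tuples R ns (Suc (Suc j)). hoch_d ns (Suc j) f y = mzero"
    and van: "\<forall>x\<in>tuples R ns (Suc j). \<forall>r c. psum ns (Suc t) \<le> r \<longrightarrow> f x r c = 0"
    and x: "x \<in> tuples R ns (Suc j)" and r: "psum ns t \<le> r"
  shows "f x r c = hoch_d ns j (gk ns t j f) x r c"
proof -
  let ?n = "sum_list ns"
  let ?z = "psum ns t - 1"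
  let ?g = "gk ns t j f"
  have zf: "psum ns (t - 1) \<le> ?z" "?z < psum ns t" using z_facts[OF pos t] by auto
  have EP: "l < psum ns t \<Longrightarrow> E l ?z \<in> Pn R ns" for l
    using E_P[of t ns l ?z] zf t by simp
  have gc: "cochain R ns j ?g" by (rule gk_cochain[OF pos t f])
  have fQ: "\<And>y. y \<in> tuples R ns (Suc j) \<Longrightarrow> f y \<in> Qn R ns" using f cochain_iff by blast
  have gQ: "\<And>y. y \<in> tuples R ns j \<Longrightarrow> ?g y \<in> Qn R ns" using gc cochain_iff by blast
  have ptn: "psum ns (Suc t) \<le> ?n" by (rule psum_le_n)
  have ptn': "psum ns t \<le> ?n" by (rule psum_le_n)
  show ?thesis
  proof (cases "psum ns (Suc t) \<le> r")
    case True
    have f0: "f x r c = 0" using van x True by blast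
    have g0: "\<And>y c'. ?g y r c' = 0" using True by (simp add: gk_def)
    have l0: "lact ns (x 0) (?g (sh x)) r c = 0"
    proof -
      have "\<And>l. l < ?n \<Longrightarrow> x 0 r l * ?g (sh x) l c = 0"
      proof -
        fix l assume l: "l < ?n"
        show "x 0 r l * ?g (sh x) l c = 0"
        proof (cases "l < psum ns (Suc t)")
          case True
          have "x 0 r l = 0"
          proof (cases "r < ?n")
            case True
            then have "forced_zero ns r l" using fz_ge[of ns "Suc t" r l] \<open>psum ns (Suc t) \<le> r\<close> \<open>l < psum ns (Suc t)\<close> by simp
            then show ?thesis using tuples_P[OF x, of 0] by (simp add: Pn_iff)
          next
            case False then show ?thesis using tuples_P[OF x, of 0] by (simp add: Pn_iff)
          qed
          then show ?thesis by simp
        next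
          case False then show ?thesis by (simp add: gk_def)
        qed
      qed
      then show ?thesis by (simp add: lact_eq)
    qed
    have r0: "ract ns (?g (tr j x)) (x j) r c = 0" by (simp add: ract_eq g0)
    show ?thesis using f0 l0 r0 g0 by (simp add: hoch_pt)
  next
    case False
    then have rlt: "r < psum ns (Suc t)" by simp
    show ?thesis
    proof (cases "c < psum ns t")
      case False
      then have nf: "\<not> forced_zero ns r c" using fz_block[OF t(2) r rlt] by simp
      have "f x r c = 0" using fQ[OF x] nf by (simp add: Qn_iff)
      moreover have "hoch_d ns j ?g x r c = 0"
      proof -
        have "\<forall>y\<in>tuples R ns j. ?g y \<in> Qn R ns" using gQ by blast
        from hoch_Q[OF this x] nf show ?thesis by (simp add: Qn_iff)
      qed
      ultimately show ?thesis by simp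
    next
      case True
      note c = True
      have fzc: "forced_zero ns r c" using fz_block[OF t(2) r rlt] c by simp
      have fzz: "forced_zero ns r ?z" using fz_block[OF t(2) r rlt] zf by simp
      have cn: "c < ?n" using c ptn' by simp
      define y where "y = x(Suc j := E c ?z)"
      have y: "y \<in> tuples R ns (Suc (Suc j))" using x EP[OF c] by (auto simp: y_def tuples_iff)
      have y0: "y 0 = x 0" by (simp add: y_def)
      have shy: "sh y = (sh x)(j := E c ?z)" by (auto simp: y_def sh_def fun_eq_iff)
      have shyt: "sh y \<in> tuples R ns (Suc j)" by (rule tuples_sh[OF y])
      have trY: "tr (Suc j) y = x" using x by (auto simp: y_def tr_def tuples_iff fun_eq_iff)
      have yS: "y (Suc j) = E c ?z" by (simp add: y_def)
      have my: "k < j \<Longrightarrow> merge ?n k y = (merge ?n k x)(j := E c ?z)" for k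
        by (auto simp: y_def merge_def fun_eq_iff)
      have myj: "merge ?n j y = (tr j x)(j := mat_mult ?n (x j) (E c ?z))"
        using x by (auto simp: y_def merge_def tr_def fun_eq_iff tuples_iff)
      define s :: "'a" where "s = (-1) ^ Suc j"
      define L where "L = lact ns (x 0) (f (sh y)) r ?z"
      define M where "M k = f (merge ?n k y) r ?z" for k
      have cy: "L + (\<Sum>k<Suc j. (-1) ^ Suc k * M k) + (-1) ^ Suc (Suc j) * f x r c = 0"
      proof -
        have "hoch_d ns (Suc j) f y r ?z = 0" using cyc y by (simp add: mzero_def)
        moreover have "ract ns (f x) (E c ?z) r ?z = f x r c"
          using fzz cn by (simp add: ract_eq sum_E_col)
        ultimately show ?thesis unfolding L_def M_def by (simp add: hoch_pt y0 trY yS)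
      qed
      have e1: "lact ns (x 0) (?g (sh x)) r c = s * L"
      proof -
        have "\<And>l. l < ?n \<Longrightarrow> x 0 r l * ?g (sh x) l c = s * (x 0 r l * f (sh y) l ?z)"
        proof -
          fix l assume l: "l < ?n"
          show "x 0 r l * ?g (sh x) l c = s * (x 0 r l * f (sh y) l ?z)"
          proof (cases "l < psum ns t")
            case True
            then have "forced_zero ns r l" using fz_block[OF t(2) r rlt] by simp
            then have "x 0 r l = 0" using tuples_P[OF x, of 0] by (simp add: Pn_iff)
            then show ?thesis by simp
          next
            case False
            show ?thesis
            proof (cases "l < psum ns (Suc t)")
              case True then show ?thesis using False c by (simp add: gk_def shy s_def)
            next
              case False
              then have "f (sh y) l ?z = 0" using van shyt by simp
              then show ?thesis using False by (simp add: gk_def)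
            qed
          qed
        qed
        then have "(\<Sum>l<?n. x 0 r l * ?g (sh x) l c) = s * (\<Sum>l<?n. x 0 r l * f (sh y) l ?z)"
          by (simp add: sum_distrib_left)
        then show ?thesis unfolding L_def using fzc fzz by (simp add: lact_eq)
      qed
      have e2: "k < j \<Longrightarrow> ?g (merge ?n k x) r c = s * M k" for k
        using r rlt c by (simp add: gk_def M_def my s_def)
      have e3: "ract ns (?g (tr j x)) (x j) r c = s * M j"
      proof -
        have trx: "tr j x \<in> tuples R ns (Suc j)" using x by (auto simp: tr_def tuples_iff mzero_P)
        have Lj: "lin R ns (\<lambda>v. f ((tr j x)(j := v)))" using lin_cochain[OF f trx] by simp
        have mm: "mat_mult ?n (x j) (E c ?z) = msum {..<psum ns t} (\<lambda>l. msmult (x j l c) (E l ?z))"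
        proof (rule ext, rule ext)
          fix p q
          have "x j p c = 0" if "\<not> p < psum ns t"
          proof (cases "p < ?n")
            case True
            then have "forced_zero ns p c" using fz_ge[of ns t p c] that c by simp
            then show ?thesis using tuples_P[OF x, of j] by (simp add: Pn_iff)
          next
            case False then show ?thesis using tuples_P[OF x, of j] by (simp add: Pn_iff)
          qed
          then have "msum {..<psum ns t} (\<lambda>l. msmult (x j l c) (E l ?z)) p q = (if q = ?z then x j p c else 0)"
            by (cases "q = ?z") (auto simp: msum_def msmult_def E_def sum_delta_mult)
          moreover have "mat_mult ?n (x j) (E c ?z) p q = (if q = ?z then x j p c else 0)"
            unfolding mat_mult_def by (rule sum_E_col[OF cn])
          ultimately show "mat_mult ?n (x j) (E c ?z) p q = msum {..<psum ns t} (\<lambda>l. msmult (x j l c) (E l ?z)) p q"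
            by simp
        qed
        have "M j = msum {..<psum ns t} (\<lambda>l. msmult (x j l c) (f ((tr j x)(j := E l ?z)))) r ?z"
          unfolding M_def myj mm using lin_msum[OF Lj, of "{..<psum ns t}" "\<lambda>l. E l ?z" "\<lambda>l. x j l c"] EP
          by simp
        also have "\<dots> = (\<Sum>l<psum ns t. x j l c * f ((tr j x)(j := E l ?z)) r ?z)"
          by (simp add: msum_def msmult_def)
        finally have Mj: "M j = (\<Sum>l<psum ns t. x j l c * f ((tr j x)(j := E l ?z)) r ?z)" .
        have "ract ns (?g (tr j x)) (x j) r c = (\<Sum>l<?n. ?g (tr j x) r l * x j l c)"
          using fzc by (simp add: ract_eq)
        also have "\<dots> = (\<Sum>l<?n. if l \<in> {..<psum ns t} then s * (x j l c * f ((tr j x)(j := E l ?z)) r ?z) else 0)"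
          using r rlt by (intro sum.cong) (auto simp: gk_def s_def)
        also have "\<dots> = (\<Sum>l\<in>{..<?n} \<inter> {..<psum ns t}. s * (x j l c * f ((tr j x)(j := E l ?z)) r ?z))"
          by (rule sum.inter_restrict[symmetric]) simp
        also have "{..<?n} \<inter> {..<psum ns t} = {..<psum ns t}" using ptn' by auto
        finally show ?thesis unfolding Mj sum_distrib_left .
      qed
      have ss: "s * s = 1" unfolding s_def by (simp add: power_mult_distrib[symmetric])
      have "hoch_d ns j ?g x r c = s * L + (\<Sum>k<j. (-1) ^ Suc k * (s * M k)) + s * (s * M j)"
        by (simp add: hoch_pt e1 e2 e3 s_def)
      also have "\<dots> = s * (L + (\<Sum>k<Suc j. (-1) ^ Suc k * M k))"
        by (simp add: sum_distrib_left algebra_simps s_def)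
      also have "\<dots> = s * (- ((-1) ^ Suc (Suc j) * f x r c))"
      proof -
        have h: "L + (\<Sum>k<Suc j. (-1) ^ Suc k * M k) = - ((-1) ^ Suc (Suc j) * f x r c)"
          using cy by (simp only: eq_neg_iff_add_eq_0)
        show ?thesis by (simp only: h)
      qed
      also have "\<dots> = s * s * f x r c" by (simp add: s_def)
      finally show ?thesis using ss by simp
    qed
  qed
qed



lemma main_ind:
  assumes pos: "\<forall>m\<in>set ns. 0 < m"
  shows "\<forall>f. cochain R ns (Suc j) f \<and> (\<forall>y\<in>tuples R ns (Suc (Suc j)). hoch_d ns (Suc j) f y = mzero)
     \<and> (\<forall>x\<in>tuples R ns (Suc j). \<forall>r c. psum ns t \<le> r \<longrightarrow> f x r c = 0)
     \<longrightarrow> (\<exists>g. cochain R ns j g \<and> (\<forall>x\<in>tuples R ns (Suc j). f x = hoch_d ns j g x))"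
proof (induction t)
  case 0
  show ?case
  proof (intro allI impI)
    fix f :: "(nat \<Rightarrow> 'a mat) \<Rightarrow> 'a mat"
    assume h: "cochain R ns (Suc j) f \<and> (\<forall>y\<in>tuples R ns (Suc (Suc j)). hoch_d ns (Suc j) f y = mzero)
     \<and> (\<forall>x\<in>tuples R ns (Suc j). \<forall>r c. psum ns 0 \<le> r \<longrightarrow> f x r c = 0)"
    have "\<forall>x\<in>tuples R ns (Suc j). f x = hoch_d ns j (\<lambda>x. mzero) x"
      using h by (auto simp: hoch_zero fun_eq_iff) (simp add: mzero_def)
    then show "\<exists>g. cochain R ns j g \<and> (\<forall>x\<in>tuples R ns (Suc j). f x = hoch_d ns j g x)"
      using cochain_zero by blast
  qed
next
  case (Suc t)
  show ?case
  proof (intro allI impI)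
    fix f :: "(nat \<Rightarrow> 'a mat) \<Rightarrow> 'a mat"
    assume h: "cochain R ns (Suc j) f \<and> (\<forall>y\<in>tuples R ns (Suc (Suc j)). hoch_d ns (Suc j) f y = mzero)
     \<and> (\<forall>x\<in>tuples R ns (Suc j). \<forall>r c. psum ns (Suc t) \<le> r \<longrightarrow> f x r c = 0)"
    have f: "cochain R ns (Suc j) f" and cyc: "\<forall>y\<in>tuples R ns (Suc (Suc j)). hoch_d ns (Suc j) f y = mzero"
      and van: "\<forall>x\<in>tuples R ns (Suc j). \<forall>r c. psum ns (Suc t) \<le> r \<longrightarrow> f x r c = 0" using h by auto
    have fQ: "\<And>y. y \<in> tuples R ns (Suc j) \<Longrightarrow> f y \<in> Qn R ns" using f cochain_iff by blast
    consider "t = 0" | "length ns \<le> t" | "0 < t \<and> t < length ns" by linarith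
    then show "\<exists>g. cochain R ns j g \<and> (\<forall>x\<in>tuples R ns (Suc j). f x = hoch_d ns j g x)"
    proof cases
      case 1
      have "\<forall>x\<in>tuples R ns (Suc j). \<forall>r c. psum ns t \<le> r \<longrightarrow> f x r c = 0"
      proof (intro ballI allI impI)
        fix x r c assume x: "x \<in> tuples R ns (Suc j)" and "psum ns t \<le> r"
        show "f x r c = 0"
        proof (cases "psum ns (Suc t) \<le> r")
          case True then show ?thesis using van x by blast
        next
          case False
          have "\<not> forced_zero ns r c"
          proof
            assume "forced_zero ns r c"
            then obtain t' where t': "t' < length ns" "psum ns t' \<le> r" "r < psum ns (Suc t')" "c < psum ns t'"
              using fz_iff by blast
            have "t' = 0"
            proof (rule ccontr)
              assume "t' \<noteq> 0" then have "Suc 0 \<le> t'" by simp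
              then show False using psum_mono[of "Suc 0" t' ns] False t' 1 by simp
            qed
            then show False using t' by simp
          qed
          then show ?thesis using fQ[OF x] by (simp add: Qn_iff)
        qed
      qed
      then show ?thesis using Suc.IH f cyc by blast
    next
      case 2
      then have "psum ns (Suc t) = psum ns t" by (simp add: psum_ge_len)
      then show ?thesis using Suc.IH h by auto
    next
      case 3
      then have t: "0 < t" "t < length ns" by auto
      let ?g = "gk ns t j f"
      have gc: "cochain R ns j ?g" by (rule gk_cochain[OF pos t f])
      define f1 where "f1 = (\<lambda>x. madd (f x) (msmult (-1) (hoch_d ns j ?g x)))"
      have f1c: "cochain R ns (Suc j) f1"
        unfolding f1_def by (rule cochain_comb[OF f hoch_cochain[OF gc]])
      have f1cyc: "\<forall>y\<in>tuples R ns (Suc (Suc j)). hoch_d ns (Suc j) f1 y = mzero"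
      proof
        fix y assume y: "y \<in> tuples R ns (Suc (Suc j))"
        have "hoch_d ns (Suc j) f1 y = madd (hoch_d ns (Suc j) f y) (msmult (-1) (hoch_d ns (Suc j) (hoch_d ns j ?g) y))"
          unfolding f1_def by (rule hoch_comb)
        also have "\<dots> = mzero" using cyc y dd[OF y] by (simp add: madd_def msmult_def mzero_def fun_eq_iff)
        finally show "hoch_d ns (Suc j) f1 y = mzero" .
      qed
      have f1van: "\<forall>x\<in>tuples R ns (Suc j). \<forall>r c. psum ns t \<le> r \<longrightarrow> f1 x r c = 0"
      proof (intro ballI allI impI)
        fix x r c assume x: "x \<in> tuples R ns (Suc j)" and r: "psum ns t \<le> r"
        have "f x r c = hoch_d ns j ?g x r c" by (rule key_identity[OF pos t f cyc van x r])
        then show "f1 x r c = 0" by (simp add: f1_def madd_def msmult_def)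
      qed
      obtain g' where g': "cochain R ns j g'" "\<forall>x\<in>tuples R ns (Suc j). f1 x = hoch_d ns j g' x"
        using Suc.IH f1c f1cyc f1van by blast
      define G where "G = (\<lambda>x. madd (?g x) (msmult 1 (g' x)))"
      have Gc: "cochain R ns j G" unfolding G_def by (rule cochain_comb[OF gc g'(1)])
      have "\<forall>x\<in>tuples R ns (Suc j). f x = hoch_d ns j G x"
      proof
        fix x assume x: "x \<in> tuples R ns (Suc j)"
        have "hoch_d ns j G x = madd (hoch_d ns j ?g x) (msmult 1 (hoch_d ns j g' x))"
          unfolding G_def by (rule hoch_comb)
        also have "\<dots> = madd (hoch_d ns j ?g x) (f1 x)" using g'(2) x by (simp add: msmult_def)
        also have "\<dots> = f x" by (simp add: f1_def madd_def msmult_def fun_eq_iff)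
        finally show "f x = hoch_d ns j G x" by simp
      qed
      then show ?thesis using Gc by blast
    qed
  qed
qed

lemma sum_E_row: "b < n \<Longrightarrow> (\<Sum>k<n. E a b p k * m k q) = (if p = a then m b q else 0)"
proof -
  assume b: "b < n"
  have e: "(\<lambda>k. E a b p k * m k q) = (\<lambda>k. if k = b then (if p = a then m k q else 0) else 0)"
    by (auto simp: E_def fun_eq_iff)
  show ?thesis using b by (simp only: e sum.delta[OF finite_lessThan]) simp
qed

lemma degree0:
  assumes f: "cochain R ns 0 f" and cyc: "\<forall>x\<in>tuples R ns (Suc 0). hoch_d ns 0 f x = mzero"
    and x: "x \<in> tuples R ns 0"
  shows "f x = mzero"
proof (rule ext, rule ext)
  fix r c
  have xz: "x = (\<lambda>k. mzero)" using x by (auto simp: tuples_iff fun_eq_iff)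
  have fQ: "f x \<in> Qn R ns" using f x cochain_iff by blast
  show "f x r c = mzero r c"
  proof (cases "forced_zero ns r c")
    case False then show ?thesis using fQ by (simp add: Qn_iff mzero_def)
  next
    case True
    have rn: "r < sum_list ns" using fz_range[OF True] by simp
    have EP: "E r r \<in> Pn R ns" using rn fz_not_refl[of ns r]
      by (auto simp: Pn_iff E_def)
    define y where "y = (\<lambda>k::nat. mzero :: 'a mat)(0 := E r r)"
    have y: "y \<in> tuples R ns (Suc 0)" using EP by (auto simp: y_def tuples_iff)
    have shy: "sh y = x" by (simp add: y_def sh_def xz fun_eq_iff)
    have trY: "tr 0 y = x" by (simp add: y_def tr_def xz fun_eq_iff)
    have y0: "y 0 = E r r" by (simp add: y_def)
    have "hoch_d ns 0 f y r c = 0" using cyc y by (simp add: mzero_def)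
    then have e: "lact ns (E r r) (f x) r c - ract ns (f x) (E r r) r c = 0"
      using y0 by (simp add: hoch_pt shy trY)
    have cr: "c \<noteq> r" using True fz_not_refl by auto
    have l: "lact ns (E r r) (f x) r c = f x r c"
      using True rn by (simp add: lact_eq sum_E_row)
    have rr: "ract ns (f x) (E r r) r c = 0"
      using True rn cr by (simp add: ract_eq sum_E_col)
    show ?thesis using e l rr by (simp add: mzero_def)
  qed
qed



theorem proposition4p15:
  fixes ns :: "nat list"
  assumes "\<forall>m\<in>set ns. 0 < m"
  shows "\<forall>i. HH_vanishes TYPE('r::comm_ring_1) ns i"
proof
  fix i
  show "HH_vanishes TYPE('r) ns i"
    unfolding HH_vanishes_def
  proof (intro allI impI)
    fix f :: "(nat \<Rightarrow> 'r mat) \<Rightarrow> 'r mat"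
    assume h: "cochain TYPE('r) ns i f \<and> (\<forall>x\<in>tuples TYPE('r) ns (Suc i). hoch_d ns i f x = mzero)"
    show "if i = 0 then \<forall>x\<in>tuples TYPE('r) ns 0. f x = mzero
          else \<exists>g. cochain TYPE('r) ns (i - 1) g \<and> (\<forall>x\<in>tuples TYPE('r) ns i. f x = hoch_d ns (i - 1) g x)"
    proof (cases i)
      case 0
      then show ?thesis using degree0[of "TYPE('r)" ns f] h by auto
    next
      case (Suc j)
      have fQ: "\<And>y. y \<in> tuples TYPE('r) ns (Suc j) \<Longrightarrow> f y \<in> Qn TYPE('r) ns"
        using h Suc cochain_iff by blast
      have van: "\<forall>x\<in>tuples TYPE('r) ns (Suc j). \<forall>r c. psum ns (length ns) \<le> r \<longrightarrow> f x r c = 0"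
      proof (intro ballI allI impI)
        fix x r c assume x: "x \<in> tuples TYPE('r) ns (Suc j)" and r: "psum ns (length ns) \<le> r"
        have "f x \<in> mats (sum_list ns)" using Qn_mats fQ[OF x] by blast
        then show "f x r c = 0" using r psum_ge_len[of ns "length ns"] by (simp add: mats_def)
      qed
      obtain g where g: "cochain TYPE('r) ns j g" "\<forall>x\<in>tuples TYPE('r) ns (Suc j). f x = hoch_d ns j g x"
        using main_ind[OF assms, of "TYPE('r)" j "length ns"] h Suc van by blast
      then show ?thesis using Suc by auto
    qed
  qed
qed

end
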